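(* Let $\mathbb{F}$ be a field, $D=(X,E,s,t)$ a finite directed multigraph, $U$ an $\mathbb{F}$-vector space, $\phi:X\to U$ a map, and $T\subset E$ a spanning forest of $D$. Let $\{r_1,\dots,r_{\delta_\phi}\}$ be any $\mathbb{F}$-basis of $\mathcal{Z}_{\mathrm{alg}}:=\mathrm{Im}(B_D)\cap\mathrm{Ker}(\hat\phi)$, and for each $i$ let $\zeta_{r_i}\in\mathrm{Ker}(\partial_\phi)$ be any element with $B_D(\zeta_{r_i})=r_i$ (such elements exist). Then $$\{Z_e^{(\mathrm{top})}\}_{e\in E\setminus T}\cup\{\zeta_{r_1},\dots,\zeta_{r_{\delta_\phi}}\}$$ is an $\mathbb{F}$-basis of $\mathrm{Ker}(\partial_\phi)$.
   Context: A finite directed multigraph $D=(X,E,s,t)$ has finite sets $X,E$ and maps $s,t:E\to X$ (loops and parallel edges allowed); $c(D)$ is its number of weakly connected components. $B_D:\mathbb{F}^E\to\mathbb{F}^X$ is linear with $B_D(\mathbf{1}_e)=\mathbf{1}_{t(e)}-\mathbf{1}_{s(e)}$; $\hat\phi:\mathbb{F}^X\to U$ is the linear extension of $\phi$; $\partial_\phi:\mathbb{F}^E\to U$ is linear with $\partial_\phi(\mathbf{1}_e)=\phi(t(e))-\phi(s(e))$; $\delta_\phi:=\dim(\mathrm{Im}(B_D)\cap\mathrm{Ker}(\hat\phi))$. A spanning forest is a subset $T\subset E$ whose underlying undirected graph is acyclic and with $|T|=|X|-c(D)$. For vertices $a,b$ in the same weakly connected component, let $a=y_0,\dots,y_m=b$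 be the unique simple path in the underlying graph of $T$, $g_k\in T$ the edge joining $y_{k-1},y_k$, $\eta_k=+1$ if $s(g_k)=y_{k-1}$ and $\eta_k=-1$ if $s(g_k)=y_k$; the signed path vector is $F[a,b]=\sum_k\eta_k\mathbf{1}_{g_k}$ (with $F[a,a]=0$). For $e\in E\setminus T$, the topological cycle is $Z_e^{(\mathrm{top})}:=\mathbf{1}_e-F[s(e),t(e)]\in\mathbb{F}^E$. *)

theory Defs
  imports Main "HOL.Vector_Spaces" "HOL-Library.Function_Algebras"
begin

text \<open>Vectors in F^E (resp. F^X) are functions 'e => 'f (resp. 'x => 'f) vanishing outside E
  (resp. X); their vector space structure is the pointwise one.\<close>

definition multigraph :: "'x set \<Rightarrow> 'e set \<Rightarrow> ('e \<Rightarrow> 'x) \<Rightarrow> ('e \<Rightarrow> 'x) \<Rightarrow> bool" where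
  "multigraph X E s t \<longleftrightarrow> finite X \<and> finite E \<and> (\<forall>e\<in>E. s e \<in> X \<and> t e \<in> X)"

definition fscale :: "'f::field \<Rightarrow> ('a \<Rightarrow> 'f) \<Rightarrow> ('a \<Rightarrow> 'f)" where
  "fscale c g = (\<lambda>x. c * g x)"

definition fspace :: "'a set \<Rightarrow> ('a \<Rightarrow> 'f::zero) set" where
  "fspace A = {g. \<forall>x. x \<notin> A \<longrightarrow> g x = 0}"

definition ind :: "'a \<Rightarrow> 'a \<Rightarrow> 'f::{zero,one}" where
  "ind a = (\<lambda>x. if x = a then 1 else 0)"

definition uconn :: "'e set \<Rightarrow> ('e \<Rightarrow> 'x) \<Rightarrow> ('e \<Rightarrow> 'x) \<Rightarrow> ('x \<times> 'x) set" where
  "uconn A s t = ({(s e, t e) | e. e \<in> A} \<union> {(t e, s e) | e. e \<in> A})\<^sup>*"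

definition ncomp :: "'x set \<Rightarrow> 'e set \<Rightarrow> ('e \<Rightarrow> 'x) \<Rightarrow> ('e \<Rightarrow> 'x) \<Rightarrow> nat" where
  "ncomp X E s t = card (X // uconn E s t)"

text \<open>The underlying undirected multigraph of (X,T) is acyclic: no edge of T lies on a cycle,
  i.e. the endpoints of every edge e of T are not connected in T - {e}
  (in particular T contains no loops and no pair of parallel edges).\<close>
definition acyclic_edges :: "'e set \<Rightarrow> ('e \<Rightarrow> 'x) \<Rightarrow> ('e \<Rightarrow> 'x) \<Rightarrow> bool" where
  "acyclic_edges T s t \<longleftrightarrow> (\<forall>e\<in>T. (s e, t e) \<notin> uconn (T - {e}) s t)"

definition spanning_forest :: "'x set \<Rightarrow> 'e set \<Rightarrow> ('e \<Rightarrow> 'x) \<Rightarrow> ('e \<Rightarrow> 'x) \<Rightarrow> 'e set \<Rightarrow> bool" where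
  "spanning_forest X E s t T \<longleftrightarrow>
     T \<subseteq> E \<and> acyclic_edges T s t \<and> card T = card X - ncomp X E s t"

definition simple_path ::
  "'e set \<Rightarrow> ('e \<Rightarrow> 'x) \<Rightarrow> ('e \<Rightarrow> 'x) \<Rightarrow> 'x \<Rightarrow> 'x \<Rightarrow> 'x list \<Rightarrow> 'e list \<Rightarrow> bool" where
  "simple_path T s t a b ys gs \<longleftrightarrow>
     length ys = Suc (length gs) \<and> hd ys = a \<and> last ys = b \<and> distinct ys \<and>
     (\<forall>k < length gs. gs ! k \<in> T \<and>
        ((s (gs ! k) = ys ! k \<and> t (gs ! k) = ys ! Suc k) \<or>
         (s (gs ! k) = ys ! Suc k \<and> t (gs ! k) = ys ! k)))"

definition path_vec ::
  "'e set \<Rightarrow> ('e \<Rightarrow> 'x) \<Rightarrow> ('e \<Rightarrow> 'x) \<Rightarrow> 'x \<Rightarrow> 'x \<Rightarrow> ('e \<Rightarrow> 'f::ring_1)" where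
  "path_vec T s t a b =
     (let (ys, gs) = (THE p. simple_path T s t a b (fst p) (snd p)) in
      (\<lambda>e. \<Sum>k<length gs. if gs ! k = e then (if s (gs ! k) = ys ! k then 1 else -1) else 0))"

definition Ztop :: "'e set \<Rightarrow> ('e \<Rightarrow> 'x) \<Rightarrow> ('e \<Rightarrow> 'x) \<Rightarrow> 'e \<Rightarrow> ('e \<Rightarrow> 'f::ring_1)" where
  "Ztop T s t e = (\<lambda>g. ind e g - path_vec T s t (s e) (t e) g)"

definition BD :: "'x set \<Rightarrow> 'e set \<Rightarrow> ('e \<Rightarrow> 'x) \<Rightarrow> ('e \<Rightarrow> 'x) \<Rightarrow> ('e \<Rightarrow> 'f::ring_1) \<Rightarrow> ('x \<Rightarrow> 'f)" where
  "BD X E s t z = (\<lambda>x. \<Sum>e\<in>E. z e * (ind (t e) x - ind (s e) x))"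

definition phi_hat :: "('f::field \<Rightarrow> 'u \<Rightarrow> 'u) \<Rightarrow> 'x set \<Rightarrow> ('x \<Rightarrow> 'u::comm_monoid_add) \<Rightarrow> ('x \<Rightarrow> 'f) \<Rightarrow> 'u" where
  "phi_hat scale X \<phi> g = (\<Sum>x\<in>X. scale (g x) (\<phi> x))"

definition dphi :: "('f::field \<Rightarrow> 'u \<Rightarrow> 'u) \<Rightarrow> 'e set \<Rightarrow> ('e \<Rightarrow> 'x) \<Rightarrow> ('e \<Rightarrow> 'x) \<Rightarrow> ('x \<Rightarrow> 'u::ab_group_add)
    \<Rightarrow> ('e \<Rightarrow> 'f) \<Rightarrow> 'u" where
  "dphi scale E s t \<phi> z = (\<Sum>e\<in>E. scale (z e) (\<phi> (t e) - \<phi> (s e)))"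

definition ker_dphi :: "('f::field \<Rightarrow> 'u \<Rightarrow> 'u) \<Rightarrow> 'e set \<Rightarrow> ('e \<Rightarrow> 'x) \<Rightarrow> ('e \<Rightarrow> 'x) \<Rightarrow> ('x \<Rightarrow> 'u::ab_group_add)
    \<Rightarrow> ('e \<Rightarrow> 'f) set" where
  "ker_dphi scale E s t \<phi> = {z \<in> fspace E. dphi scale E s t \<phi> z = 0}"

definition Zalg :: "('f::field \<Rightarrow> 'u \<Rightarrow> 'u) \<Rightarrow> 'x set \<Rightarrow> 'e set \<Rightarrow> ('e \<Rightarrow> 'x) \<Rightarrow> ('e \<Rightarrow> 'x)
    \<Rightarrow> ('x \<Rightarrow> 'u::ab_group_add) \<Rightarrow> ('x \<Rightarrow> 'f) set" where
  "Zalg scale X E s t \<phi> = BD X E s t ` fspace E \<inter> {g \<in> fspace X. phi_hat scale X \<phi> g = 0}"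

definition delta_phi :: "('f::field \<Rightarrow> 'u \<Rightarrow> 'u) \<Rightarrow> 'x set \<Rightarrow> 'e set \<Rightarrow> ('e \<Rightarrow> 'x) \<Rightarrow> ('e \<Rightarrow> 'x)
    \<Rightarrow> ('x \<Rightarrow> 'u::ab_group_add) \<Rightarrow> nat" where
  "delta_phi scale X E s t \<phi> = vector_space.dim fscale (Zalg scale X E s t \<phi>)"

definition is_basis_family :: "('f::field \<Rightarrow> 'v \<Rightarrow> 'v) \<Rightarrow> 'i set \<Rightarrow> ('i \<Rightarrow> 'v::ab_group_add) \<Rightarrow> 'v set \<Rightarrow> bool" where
  "is_basis_family sc I v W \<longleftrightarrow>
     inj_on v I \<and> module.independent sc (v ` I) \<and> module.span sc (v ` I) = W"

end

theory Submission
  imports Defs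
begin


lemma vs_fscale: "vector_space (fscale :: 'f::field \<Rightarrow> ('a \<Rightarrow> 'f) \<Rightarrow> ('a \<Rightarrow> 'f))"
  by unfold_locales (auto simp: fscale_def algebra_simps)

lemma sum_fun_apply: "(\<Sum>i\<in>I. (f i :: 'a \<Rightarrow> 'b::comm_monoid_add)) x = (\<Sum>i\<in>I. f i x)"
  by (induction I rule: infinite_finite_induct) auto

lemma fsum: "(\<Sum>i\<in>I. fscale (c i) (f i)) = (\<lambda>x. \<Sum>i\<in>I. c i * f i x)"
  by (rule ext) (simp add: sum_fun_apply fscale_def)

lemma BD_lin: "BD X E s t (\<lambda>e. \<Sum>i\<in>I. c i * f i e) = (\<lambda>x. \<Sum>i\<in>I. c i * BD X E s t (f i) x)"
  unfolding BD_def by (rule ext) (simp add: sum_distrib_left sum_distrib_right mult.assoc sum.swap[of _ E])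

lemma BD_fsum: "BD X E s t (\<Sum>i\<in>I. fscale (c i) (f i)) = (\<Sum>i\<in>I. fscale (c i) (BD X E s t (f i)))"
  by (simp add: fsum BD_lin)

lemma BD_diff: "BD X E s t (\<lambda>e. f e - g e) = (\<lambda>x. BD X E s t f x - BD X E s t g x)"
  unfolding BD_def by (rule ext) (simp add: left_diff_distrib sum_subtractf)

lemma BD_fspace: "multigraph X E s t \<Longrightarrow> BD X E s t z \<in> fspace X"
  unfolding BD_def fspace_def multigraph_def ind_def by (auto intro!: sum.neutral)

lemma dphi_BD:
  assumes D: "multigraph X E s t" and U: "vector_space scale"
  shows "dphi scale E s t \<phi> z = phi_hat scale X \<phi> (BD X E s t z)"
proof -
  interpret U: vector_space scale by fact
  have fin: "finite X" "finite E" using D by (auto simp: multigraph_def)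
  have "phi_hat scale X \<phi> (BD X E s t z) = (\<Sum>x\<in>X. \<Sum>e\<in>E. scale (z e * (ind (t e) x - ind (s e) x)) (\<phi> x))"
    unfolding phi_hat_def BD_def by (simp add: U.scale_sum_left)
  also have "\<dots> = (\<Sum>e\<in>E. \<Sum>x\<in>X. scale (z e * (ind (t e) x - ind (s e) x)) (\<phi> x))"
    by (rule sum.swap)
  also have "\<dots> = (\<Sum>e\<in>E. scale (z e) (\<phi> (t e) - \<phi> (s e)))"
  proof (rule sum.cong[OF refl])
    fix e assume e: "e \<in> E"
    have "(\<Sum>x\<in>X. scale (z e * (ind (t e) x - ind (s e) x)) (\<phi> x))
        = (\<Sum>x\<in>X. scale (z e * ind (t e) x) (\<phi> x)) - (\<Sum>x\<in>X. scale (z e * ind (s e) x) (\<phi> x))"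
      by (simp add: right_diff_distrib U.scale_left_diff_distrib sum_subtractf)
    also have "(\<Sum>x\<in>X. scale (z e * ind (t e) x) (\<phi> x)) = scale (z e) (\<phi> (t e))"
    proof -
      have "\<And>x. scale (z e * ind (t e) x) (\<phi> x) = (if x = t e then scale (z e) (\<phi> x) else 0)"
        by (simp add: ind_def)
      then show ?thesis using e D fin by (simp add: multigraph_def sum.delta')
    qed
    also have "(\<Sum>x\<in>X. scale (z e * ind (s e) x) (\<phi> x)) = scale (z e) (\<phi> (s e))"
    proof -
      have "\<And>x. scale (z e * ind (s e) x) (\<phi> x) = (if x = s e then scale (z e) (\<phi> x) else 0)"
        by (simp add: ind_def)
      then show ?thesis using e D fin by (simp add: multigraph_def sum.delta')
    qed
    finally show "(\<Sum>x\<in>X. scale (z e * (ind (t e) x - ind (s e) x)) (\<phi> x)) = scale (z e) (\<phi> (t e) - \<phi> (s e))"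
      by (simp add: U.scale_right_diff_distrib)
  qed
  finally show ?thesis unfolding dphi_def by simp
qed




lemma uconn_mono: "A \<subseteq> B \<Longrightarrow> uconn A s t \<subseteq> uconn B s t"
  unfolding uconn_def by (rule rtrancl_mono) blast

lemma uconn_sym: "(x,y) \<in> uconn A s t \<Longrightarrow> (y,x) \<in> uconn A s t"
proof -
  have "sym ({(s e, t e) | e. e \<in> A} \<union> {(t e, s e) | e. e \<in> A})"
    unfolding sym_def by blast
  then have "sym (uconn A s t)" unfolding uconn_def by (rule sym_rtrancl)
  then show "(x,y) \<in> uconn A s t \<Longrightarrow> (y,x) \<in> uconn A s t" unfolding sym_def by blast
qed

lemma uconn_trans: "(x,y) \<in> uconn A s t \<Longrightarrow> (y,z) \<in> uconn A s t \<Longrightarrow> (x,z) \<in> uconn A s t"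
  unfolding uconn_def by (rule rtrancl_trans)

lemma uconn_refl[simp]: "(x,x) \<in> uconn A s t"
  unfolding uconn_def by simp

lemma uconn_edge: "e \<in> A \<Longrightarrow> (s e, t e) \<in> uconn A s t"
  unfolding uconn_def by (rule r_into_rtrancl) blast

lemma uconn_edge': "e \<in> A \<Longrightarrow> (t e, s e) \<in> uconn A s t"
  unfolding uconn_def by (rule r_into_rtrancl) blast

lemma uconn_empty: "uconn {} s t = Id"
  unfolding uconn_def by simp

lemma uconn_insert:
  assumes "(x,y) \<in> uconn (insert e A) s t"
  shows "(x,y) \<in> uconn A s t \<or> ((x, s e) \<in> uconn A s t \<and> (t e, y) \<in> uconn A s t)
           \<or> ((x, t e) \<in> uconn A s t \<and> (s e, y) \<in> uconn A s t)"
  using assms unfolding uconn_def[of "insert e A"]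
proof (induction rule: rtrancl_induct)
  case base then show ?case by simp
next
  case (step y z)
  from step(2) have "(y,z) \<in> uconn A s t \<or> (y = s e \<and> z = t e) \<or> (y = t e \<and> z = s e)"
    by (auto intro: uconn_edge uconn_edge')
  then show ?case using step(3) uconn_trans[of _ _ A s t] uconn_sym[of _ _ A s t] uconn_refl[of _ A s t]
    by blast
qed

lemma uconn_class: "(a,b) \<in> uconn A s t \<Longrightarrow> uconn A s t `` {a} = uconn A s t `` {b}"
proof -
  assume ab: "(a,b) \<in> uconn A s t"
  then have ba: "(b,a) \<in> uconn A s t" by (rule uconn_sym)
  show ?thesis
  proof (intro set_eqI iffI)
    fix x assume "x \<in> uconn A s t `` {a}"
    then show "x \<in> uconn A s t `` {b}" using uconn_trans[OF ba] by blast
  next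
    fix x assume "x \<in> uconn A s t `` {b}"
    then show "x \<in> uconn A s t `` {a}" using uconn_trans[OF ab] by blast
  qed
qed

lemma quot_img: "X // r = (\<lambda>x. r `` {x}) ` X"
  unfolding quotient_def by blast




lemma card_merge:
  assumes X: "finite X" and u: "s e \<in> X" and v: "t e \<in> X"
    and nc: "(s e, t e) \<notin> uconn A s t"
  shows "card (X // uconn (insert e A) s t) + 1 = card (X // uconn A s t)"
proof -
  define R where "R = uconn A s t"
  define R' where "R' = uconn (insert e A) s t"
  have RR': "R \<subseteq> R'" unfolding R_def R'_def by (rule uconn_mono) blast
  have img: "R' `` (R `` {x}) = R' `` {x}" for x
  proof (intro set_eqI iffI)
    fix y assume "y \<in> R' `` (R `` {x})"
    then obtain w where w: "(x,w) \<in> R" "(w,y) \<in> R'" by blast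
    then have "(x,w) \<in> R'" using RR' by blast
    then have "(x,y) \<in> R'" using w(2) uconn_trans unfolding R'_def by metis
    then show "y \<in> R' `` {x}" by blast
  next
    fix y assume "y \<in> R' `` {x}"
    moreover have "x \<in> R `` {x}" unfolding R_def by simp
    ultimately show "y \<in> R' `` (R `` {x})" by blast
  qed
  define Cv where "Cv = R `` {t e}"
  define Cu where "Cu = R `` {s e}"
  have CuCv: "Cu \<noteq> Cv"
  proof
    assume "Cu = Cv"
    moreover have "t e \<in> Cv" unfolding Cv_def R_def by simp
    ultimately have "t e \<in> Cu" by simp
    then show False using nc unfolding Cu_def R_def by simp
  qed
  have fin: "finite (X // R)" unfolding quot_img using X by simp
  have Cvin: "Cv \<in> X // R" unfolding quot_img Cv_def using v by blast
  have Cuin: "Cu \<in> X // R - {Cv}" using u CuCv unfolding quot_img Cu_def by blast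
  have "bij_betw (\<lambda>C. R' `` C) (X // R - {Cv}) (X // R')"
  proof (rule bij_betw_imageI)
    show "inj_on (\<lambda>C. R' `` C) (X // R - {Cv})"
    proof (rule inj_onI)
      fix C1 C2 assume C1: "C1 \<in> X // R - {Cv}" and C2: "C2 \<in> X // R - {Cv}" and eq: "R' `` C1 = R' `` C2"
      obtain x1 where x1: "x1 \<in> X" "C1 = R `` {x1}" using C1 unfolding quot_img by blast
      obtain x2 where x2: "x2 \<in> X" "C2 = R `` {x2}" using C2 unfolding quot_img by blast
      have "x2 \<in> R' `` {x2}" by (simp add: R'_def)
      then have "x2 \<in> R' `` {x1}" using eq img[of x1] img[of x2] x1(2) x2(2) by simp
      then have "(x1, x2) \<in> R'" by blast
      then have "(x1,x2) \<in> R \<or> ((x1, s e) \<in> R \<and> (t e, x2) \<in> R) \<or> ((x1, t e) \<in> R \<and> (s e, x2) \<in> R)"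
        unfolding R_def R'_def by (rule uconn_insert)
      then show "C1 = C2"
      proof (elim disjE conjE)
        assume "(x1,x2) \<in> R" then show ?thesis using x1(2) x2(2) uconn_class[of x1 x2 A s t] unfolding R_def by simp
      next
        assume "(t e, x2) \<in> R" then have "C2 = Cv" using x2(2) uconn_class[of "t e" x2 A s t] unfolding R_def Cv_def by simp
        then show ?thesis using C2 by blast
      next
        assume "(x1, t e) \<in> R" then have "C1 = Cv" using x1(2) uconn_class[of x1 "t e" A s t] unfolding R_def Cv_def by simp
        then show ?thesis using C1 by blast
      qed
    qed
    show "(\<lambda>C. R' `` C) ` (X // R - {Cv}) = X // R'"
    proof
      show "(\<lambda>C. R' `` C) ` (X // R - {Cv}) \<subseteq> X // R'"
      proof
        fix D assume "D \<in> (\<lambda>C. R' `` C) ` (X // R - {Cv})"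
        then obtain C where C: "C \<in> X // R" "D = R' `` C" by blast
        then obtain x where x: "x \<in> X" "C = R `` {x}" unfolding quot_img by blast
        have "D = R' `` {x}" using C(2) x(2) img[of x] by simp
        then show "D \<in> X // R'" using x(1) unfolding quot_img by blast
      qed
      show "X // R' \<subseteq> (\<lambda>C. R' `` C) ` (X // R - {Cv})"
      proof
        fix D assume "D \<in> X // R'"
        then obtain x where x: "x \<in> X" "D = R' `` {x}" unfolding quot_img by blast
        show "D \<in> (\<lambda>C. R' `` C) ` (X // R - {Cv})"
        proof (cases "R `` {x} = Cv")
          case False
          then have "R `` {x} \<in> X // R - {Cv}" using x(1) unfolding quot_img by blast
          moreover have "D = R' `` (R `` {x})" using x(2) img[of x] by simp
          ultimately show ?thesis by blast
        next
          case True
          have "x \<in> R `` {x}" by (simp add: R_def)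
          then have "(t e, x) \<in> R" using True unfolding Cv_def by blast
          then have "(t e, x) \<in> R'" using RR' by blast
          moreover have "(s e, t e) \<in> R'" unfolding R'_def by (rule uconn_edge) simp
          ultimately have "(s e, x) \<in> R'" using uconn_trans[of "s e" "t e" "insert e A" s t x] unfolding R'_def by blast
          then have "R' `` {s e} = R' `` {x}" unfolding R'_def by (rule uconn_class)
          then have "D = R' `` Cu" using x(2) img[of "s e"] unfolding Cu_def by simp
          then show ?thesis using Cuin by blast
        qed
      qed
    qed
  qed
  then have c1: "card (X // R - {Cv}) = card (X // R')" by (rule bij_betw_same_card)
  have c2: "card (X // R - {Cv}) = card (X // R) - 1" using Cvin by (rule card_Diff_singleton)
  have c3: "card (X // R) > 0" using Cvin fin by (auto simp: card_gt_0_iff)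
  have "card (X // R') + 1 = card (X // R)" using c1 c2 c3 by linarith
  then show ?thesis by (simp only: R_def R'_def)
qed




lemma acyclic_mono: "acyclic_edges B s t \<Longrightarrow> A \<subseteq> B \<Longrightarrow> acyclic_edges A s t"
  unfolding acyclic_edges_def using uconn_mono[of "A - {_}" "B - {_}" s t] by blast

lemma forest_card:
  assumes "finite T" "finite X" "\<forall>e\<in>T. s e \<in> X \<and> t e \<in> X" "acyclic_edges T s t"
  shows "card (X // uconn T s t) + card T = card X"
  using assms
proof (induction T rule: finite_induct)
  case empty
  have "card (X // uconn {} s t) = card X"
    unfolding uconn_empty quot_img by (simp add: card_image inj_on_def)
  then show ?case by simp
next
  case (insert e F)
  have acF: "acyclic_edges F s t" using insert(6) by (rule acyclic_mono) blast
  have "insert e F - {e} = F" using insert(2) by simp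
  then have nc: "(s e, t e) \<notin> uconn F s t"
    using insert(6) unfolding acyclic_edges_def by (metis insertI1)
  have "s e \<in> X" "t e \<in> X" using insert(5) by simp_all
  then have "card (X // uconn (insert e F) s t) + 1 = card (X // uconn F s t)"
    using card_merge[OF insert(4) _ _ nc] by simp
  then show ?case using insert acF by simp
qed

lemma img_mono:
  assumes sub: "A \<subseteq> B"
  shows "uconn B s t `` (uconn A s t `` {x}) = uconn B s t `` {x}"
proof (intro set_eqI iffI)
  fix y assume "y \<in> uconn B s t `` (uconn A s t `` {x})"
  then obtain w where w: "(x,w) \<in> uconn A s t" "(w,y) \<in> uconn B s t" by blast
  then have "(x,w) \<in> uconn B s t" using uconn_mono[OF sub] by blast
  then have "(x,y) \<in> uconn B s t" using w(2) by (rule uconn_trans)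
  then show "y \<in> uconn B s t `` {x}" by blast
next
  fix y assume "y \<in> uconn B s t `` {x}"
  moreover have "x \<in> uconn A s t `` {x}" by simp
  ultimately show "y \<in> uconn B s t `` (uconn A s t `` {x})" by blast
qed

lemma quot_card_mono:
  assumes X: "finite X" and sub: "A \<subseteq> B"
  shows "card (X // uconn B s t) \<le> card (X // uconn A s t)"
proof -
  have "(\<lambda>C. uconn B s t `` C) ` (X // uconn A s t) = (\<lambda>x. uconn B s t `` (uconn A s t `` {x})) ` X"
    unfolding quot_img image_image by simp
  also have "\<dots> = X // uconn B s t"
    unfolding quot_img using img_mono[OF sub, of s t] by (intro image_cong) auto
  finally have "X // uconn B s t = (\<lambda>C. uconn B s t `` C) ` (X // uconn A s t)" by simp
  then show ?thesis using X by (simp add: quot_img card_image_le)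
qed

lemma forest_connects:
  assumes D: "multigraph X E s t" and T: "spanning_forest X E s t T" and e: "e \<in> E"
  shows "(s e, t e) \<in> uconn T s t"
proof (rule ccontr)
  assume nc: "(s e, t e) \<notin> uconn T s t"
  have TE: "T \<subseteq> E" and ac: "acyclic_edges T s t" and cT: "card T = card X - ncomp X E s t"
    using T unfolding spanning_forest_def by auto
  have fX: "finite X" and fE: "finite E" and inX: "\<forall>e\<in>E. s e \<in> X \<and> t e \<in> X"
    using D unfolding multigraph_def by auto
  have fT: "finite T" using TE fE finite_subset by blast
  have fc: "card (X // uconn T s t) + card T = card X"
    using TE inX by (intro forest_card[OF fT fX _ ac]) blast
  have m: "card (X // uconn (insert e T) s t) + 1 = card (X // uconn T s t)"
    using inX e by (intro card_merge[OF fX _ _ nc]) simp_all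
  have "card (X // uconn E s t) \<le> card (X // uconn (insert e T) s t)"
    using TE e by (intro quot_card_mono[OF fX]) blast
  then show False using fc m cT unfolding ncomp_def by linarith
qed





definition joins :: "('e \<Rightarrow> 'x) \<Rightarrow> ('e \<Rightarrow> 'x) \<Rightarrow> 'e \<Rightarrow> 'x \<Rightarrow> 'x \<Rightarrow> bool" where
  "joins s t g a b \<longleftrightarrow> (s g = a \<and> t g = b) \<or> (s g = b \<and> t g = a)"

inductive sp :: "'e set \<Rightarrow> ('e \<Rightarrow> 'x) \<Rightarrow> ('e \<Rightarrow> 'x) \<Rightarrow> 'x \<Rightarrow> 'x \<Rightarrow> 'x list \<Rightarrow> 'e list \<Rightarrow> bool"
  for T s t where
  sp_nil: "sp T s t a a [a] []"
| sp_cons: "g \<in> T \<Longrightarrow> joins s t g a y \<Longrightarrow> a \<notin> set ys \<Longrightarrow> sp T s t y b ys gs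
    \<Longrightarrow> sp T s t a b (a # ys) (g # gs)"

lemma sp_hd: "sp T s t a b ys gs \<Longrightarrow> ys \<noteq> [] \<and> hd ys = a \<and> last ys = b"
  by (induction rule: sp.induct) auto

lemma sp_simple: "sp T s t a b ys gs \<Longrightarrow> simple_path T s t a b ys gs"
proof (induction rule: sp.induct)
  case (sp_nil a) then show ?case unfolding simple_path_def by simp
next
  case (sp_cons g a y ys b gs)
  have h: "ys \<noteq> []" "hd ys = y" "last ys = b" using sp_hd[OF sp_cons(4)] by auto
  have y0: "ys ! 0 = y" using h by (simp add: hd_conv_nth)
  have K: "\<forall>k < length (g # gs). (g # gs) ! k \<in> T \<and>
          (s ((g # gs) ! k) = (a # ys) ! k \<and> t ((g # gs) ! k) = (a # ys) ! Suc k \<or>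
           s ((g # gs) ! k) = (a # ys) ! Suc k \<and> t ((g # gs) ! k) = (a # ys) ! k)"
  proof (intro allI impI)
    fix k assume k: "k < length (g # gs)"
    show "(g # gs) ! k \<in> T \<and>
          (s ((g # gs) ! k) = (a # ys) ! k \<and> t ((g # gs) ! k) = (a # ys) ! Suc k \<or>
           s ((g # gs) ! k) = (a # ys) ! Suc k \<and> t ((g # gs) ! k) = (a # ys) ! k)"
    proof (cases k)
      case 0 then show ?thesis using sp_cons(1,2) y0 unfolding joins_def by auto
    next
      case (Suc k') then show ?thesis using k sp_cons(5) unfolding simple_path_def by simp
    qed
  qed
  show ?case unfolding simple_path_def
    using sp_cons(3,5) h K unfolding simple_path_def by simp
qed

lemma simple_sp: "simple_path T s t a b ys gs \<Longrightarrow> sp T s t a b ys gs"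
proof (induction gs arbitrary: a ys)
  case Nil
  then obtain y where "ys = [y]" unfolding simple_path_def by (cases ys) auto
  then show ?case using Nil unfolding simple_path_def by (auto intro: sp_nil)
next
  case (Cons g gs)
  have P: "length ys = Suc (Suc (length gs))" "hd ys = a" "last ys = b" "distinct ys"
    "\<forall>k < length (g#gs). (g#gs) ! k \<in> T \<and>
        ((s ((g#gs) ! k) = ys ! k \<and> t ((g#gs) ! k) = ys ! Suc k) \<or>
         (s ((g#gs) ! k) = ys ! Suc k \<and> t ((g#gs) ! k) = ys ! k))"
    using Cons(2) unfolding simple_path_def by auto
  obtain y0 ys' where ys: "ys = y0 # ys'" using P(1) by (cases ys) auto
  have y0: "y0 = a" using P(2) ys by simp
  have ne: "ys' \<noteq> []" using P(1) ys by auto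
  have K: "\<forall>k < length gs. gs ! k \<in> T \<and> (s (gs ! k) = ys' ! k \<and> t (gs ! k) = ys' ! Suc k \<or>
             s (gs ! k) = ys' ! Suc k \<and> t (gs ! k) = ys' ! k)"
  proof (intro allI impI)
    fix k assume "k < length gs"
    then have "Suc k < length (g#gs)" by simp
    then show "gs ! k \<in> T \<and> (s (gs ! k) = ys' ! k \<and> t (gs ! k) = ys' ! Suc k \<or>
             s (gs ! k) = ys' ! Suc k \<and> t (gs ! k) = ys' ! k)"
      using P(5) ys by (metis nth_Cons_Suc)
  qed
  have sp': "simple_path T s t (hd ys') b ys' gs"
    unfolding simple_path_def using P ys ne K by simp
  have IH: "sp T s t (hd ys') b ys' gs" using Cons(1)[OF sp'] .
  have e0: "g \<in> T \<and> ((s g = y0 \<and> t g = ys' ! 0) \<or> (s g = ys' ! 0 \<and> t g = y0))"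
    using P(5) ys by (metis length_Cons nth_Cons_0 nth_Cons_Suc zero_less_Suc)
  have "ys' ! 0 = hd ys'" using ne by (simp add: hd_conv_nth)
  then have j: "joins s t g a (hd ys')" using e0 y0 unfolding joins_def by auto
  have "a \<notin> set ys'" using P(4) ys y0 by simp
  then show ?case using sp_cons[OF _ j _ IH] e0 ys y0 by simp
qed

lemma sp_edges: "sp T s t a b ys gs \<Longrightarrow> set gs \<subseteq> T"
  by (induction rule: sp.induct) auto

lemma sp_edge_ends: "sp T s t a b ys gs \<Longrightarrow> g \<in> set gs \<Longrightarrow> s g \<in> set ys \<and> t g \<in> set ys"
proof (induction rule: sp.induct)
  case (sp_nil a) then show ?case by simp
next
  case (sp_cons g' a y ys b gs)
  have "y \<in> set ys" using sp_hd[OF sp_cons(4)] by (metis list.set_sel(1))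
  then show ?case using sp_cons unfolding joins_def by auto
qed

lemma sp_conn: "sp T s t a b ys gs \<Longrightarrow> set gs \<subseteq> A \<Longrightarrow> (a,b) \<in> uconn A s t"
proof (induction rule: sp.induct)
  case (sp_nil a) then show ?case by simp
next
  case (sp_cons g a y ys b gs)
  have "g \<in> A" using sp_cons(6) by simp
  then have "(a,y) \<in> uconn A s t" using sp_cons(2) uconn_edge[OF \<open>g \<in> A\<close>, of s t] uconn_edge'[OF \<open>g \<in> A\<close>, of t s]
    unfolding joins_def by auto
  moreover have "(y,b) \<in> uconn A s t" using sp_cons(5,6) by simp
  ultimately show ?case by (rule uconn_trans)
qed

lemma sp_suffix: "sp T s t a b ys gs \<Longrightarrow> d \<in> set ys \<Longrightarrow> \<exists>ys' gs'. sp T s t d b ys' gs'"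
proof (induction rule: sp.induct)
  case (sp_nil a) then show ?case by (auto intro: sp.sp_nil)
next
  case (sp_cons g a y ys b gs)
  show ?case
  proof (cases "d = a")
    case True then show ?thesis using sp.sp_cons[OF sp_cons(1-4)] by blast
  next
    case False then show ?thesis using sp_cons(5,6) by simp
  qed
qed

lemma sp_exists:
  assumes "(a,b) \<in> uconn T s t"
  shows "\<exists>ys gs. sp T s t a b ys gs"
  using assms unfolding uconn_def
proof (induction rule: converse_rtrancl_induct)
  case base then show ?case by (auto intro: sp_nil)
next
  case (step a c)
  then obtain ys gs where P: "sp T s t c b ys gs" by blast
  from step(1) obtain g where g: "g \<in> T" "joins s t g a c" unfolding joins_def by blast
  show ?case
  proof (cases "a \<in> set ys")
    case True then show ?thesis using sp_suffix[OF P] by blast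
  next
    case False then show ?thesis using sp_cons[OF g False P] by blast
  qed
qed

lemma sp_same: "sp T s t a a ys gs \<Longrightarrow> ys = [a] \<and> gs = []"
  by (erule sp.cases) (simp, metis sp_hd last_in_set)

lemma sp_inv: "sp T s t a b ys gs \<Longrightarrow> a \<noteq> b \<Longrightarrow>
   \<exists>h z zs hs. ys = a # zs \<and> gs = h # hs \<and> h \<in> T \<and> joins s t h a z \<and> a \<notin> set zs \<and> sp T s t z b zs hs"
  by (erule sp.cases) auto

lemma sp_unique:
  assumes ac: "acyclic_edges T s t"
  shows "sp T s t a b ys gs \<Longrightarrow> sp T s t a b ys' gs' \<Longrightarrow> ys = ys' \<and> gs = gs'"
proof (induction arbitrary: ys' gs' rule: sp.induct)
  case (sp_nil a)
  then show ?case using sp_same by metis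
next
  case (sp_cons g a y ys b gs)
  have hy: "y \<in> set ys" "b \<in> set ys" using sp_hd[OF sp_cons(4)] by (metis list.set_sel(1), metis last_in_set)
  have ab: "a \<noteq> b" using hy sp_cons(3) by blast
  obtain h z zs hs where Q: "ys' = a # zs" "gs' = h # hs" "h \<in> T" "joins s t h a z" "a \<notin> set zs"
      "sp T s t z b zs hs"
    using sp_inv[OF sp_cons(6) ab] by blast
  have hz: "z \<in> set zs" using sp_hd[OF Q(6)] by (metis list.set_sel(1))
  have ga: "s g = a \<or> t g = a" using sp_cons(2) unfolding joins_def by auto
  have gnot: "g \<notin> set gs" using sp_edge_ends[OF sp_cons(4)] ga sp_cons(3) by metis
  have gnot': "g \<notin> set hs" using sp_edge_ends[OF Q(6)] ga Q(5) by metis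
  show ?case
  proof (cases "h = g")
    case True
    have "y = z" using sp_cons(2) Q(4) True sp_cons(3) hy(1) Q(5) hz
      unfolding joins_def by auto
    then have "ys = zs \<and> gs = hs" using sp_cons.IH[of zs hs] Q(6) by simp
    then show ?thesis using Q(1,2) True by simp
  next
    case False
    have "set gs \<subseteq> T - {g}" using sp_edges[OF sp_cons(4)] gnot by blast
    then have yb: "(y,b) \<in> uconn (T - {g}) s t" by (rule sp_conn[OF sp_cons(4)])
    have "set (h # hs) \<subseteq> T - {g}" using sp_edges[OF Q(6)] gnot' Q(3) False by auto
    then have "(a,b) \<in> uconn (T - {g}) s t" by (rule sp_conn[OF sp.sp_cons[OF Q(3,4,5,6)]])
    then have ay: "(a,y) \<in> uconn (T - {g}) s t" using uconn_trans[OF _ uconn_sym[OF yb]] by blast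
    have "(s g, t g) \<in> uconn (T - {g}) s t"
      using sp_cons(2) ay uconn_sym[OF ay] unfolding joins_def by auto
    then show ?thesis using ac sp_cons(1) unfolding acyclic_edges_def by blast
  qed
qed




definition pv :: "('e \<Rightarrow> 'x) \<Rightarrow> 'x list \<Rightarrow> 'e list \<Rightarrow> 'e \<Rightarrow> 'f::ring_1" where
  "pv s ys gs = (\<lambda>e. \<Sum>k<length gs. if gs ! k = e then (if s (gs ! k) = ys ! k then 1 else -1) else 0)"

lemma path_vec_eq:
  assumes ac: "acyclic_edges T s t" and P: "sp T s t a b ys gs"
  shows "path_vec T s t a b = pv s ys gs"
proof -
  have "(THE p. simple_path T s t a b (fst p) (snd p)) = (ys, gs)"
  proof (rule the_equality)
    show "simple_path T s t a b (fst (ys, gs)) (snd (ys, gs))" using sp_simple[OF P] by simp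
  next
    fix p assume "simple_path T s t a b (fst p) (snd p)"
    then have "sp T s t a b (fst p) (snd p)" by (rule simple_sp)
    then have "ys = fst p \<and> gs = snd p" using sp_unique[OF ac P] by blast
    then show "p = (ys, gs)" by (cases p) simp
  qed
  then show ?thesis unfolding path_vec_def pv_def by simp
qed

lemma pv_nil: "pv s ys [] = (\<lambda>e. 0)"
  unfolding pv_def by simp

lemma pv_cons: "pv s (a # ys) (g # gs) e = (if g = e then (if s g = a then 1 else -1) else 0) + pv s ys gs e"
  unfolding pv_def length_Cons sum.lessThan_Suc_shift nth_Cons_Suc nth_Cons_0 by simp

lemma pv_zero: "e \<notin> set gs \<Longrightarrow> pv s ys gs e = 0"
  unfolding pv_def by (intro sum.neutral) (auto simp: nth_mem)

lemma BD_add: "BD X E s t (\<lambda>e. f e + h e) = (\<lambda>x. BD X E s t f x + BD X E s t h x)"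
  unfolding BD_def by (rule ext) (simp add: distrib_right sum.distrib)

lemma BD_delta: "finite E \<Longrightarrow> g \<in> E \<Longrightarrow>
   BD X E s t (\<lambda>e. if g = e then c else 0) = (\<lambda>x. c * (ind (t g) x - ind (s g) x))"
  unfolding BD_def by (rule ext) (simp add: if_distrib[of "\<lambda>u. u * _"] sum.delta cong: if_cong)

lemma pv_BD:
  assumes "sp T s t a b ys gs" "T \<subseteq> E" "finite E"
  shows "BD X E s t (pv s ys gs :: 'e \<Rightarrow> 'f::ring_1) = (\<lambda>x. ind b x - ind a x)"
  using assms
proof (induction rule: sp.induct)
  case (sp_nil a)
  show ?case unfolding pv_nil BD_def by simp
next
  case (sp_cons g a y ys b gs)
  have ya: "y \<noteq> a" using sp_hd[OF sp_cons(4)] sp_cons(3) by (metis list.set_sel(1))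
  have gE: "g \<in> E" using sp_cons(1,6) by blast
  define c :: 'f where "c = (if s g = a then 1 else -1)"
  have "pv s (a # ys) (g # gs) = (\<lambda>e. (if g = e then c else 0) + pv s ys gs e)"
    unfolding c_def by (rule ext) (simp add: pv_cons)
  then have "BD X E s t (pv s (a # ys) (g # gs)) = (\<lambda>x. c * (ind (t g) x - ind (s g) x) + (ind b x - ind y x))"
    using BD_add[of X E s t "\<lambda>e. if g = e then c else 0" "pv s ys gs"] BD_delta[OF sp_cons(7) gE, of X s t c]
      sp_cons.IH[OF sp_cons(6,7)] by simp
  also have "\<dots> = (\<lambda>x. ind b x - ind a x)"
    using sp_cons(2) ya unfolding joins_def c_def by (auto simp: algebra_simps)
  finally show ?case .
qed

lemma Z_props:
  assumes D: "multigraph X E s t" and T: "spanning_forest X E s t T" and e: "e \<in> E" "e \<notin> T"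
  shows "BD X E s t (Ztop T s t e :: 'e \<Rightarrow> 'f::ring_1) = (\<lambda>x. 0)"
    and "(Ztop T s t e :: 'e \<Rightarrow> 'f) \<in> fspace E"
    and "\<And>g. g \<notin> T \<Longrightarrow> (Ztop T s t e :: 'e \<Rightarrow> 'f) g = ind e g"
proof -
  have TE: "T \<subseteq> E" and ac: "acyclic_edges T s t" using T unfolding spanning_forest_def by auto
  have fE: "finite E" using D unfolding multigraph_def by auto
  obtain ys gs where P: "sp T s t (s e) (t e) ys gs"
    using sp_exists[OF forest_connects[OF D T e(1)]] by blast
  have Z: "(Ztop T s t e :: 'e \<Rightarrow> 'f) = (\<lambda>g. ind e g - pv s ys gs g)"
    unfolding Ztop_def path_vec_eq[OF ac P] ..
  have gsT: "set gs \<subseteq> T" by (rule sp_edges[OF P])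
  have BDi: "BD X E s t (ind e :: 'e \<Rightarrow> 'f) = (\<lambda>x. ind (t e) x - ind (s e) x)"
  proof -
    have "ind e = (\<lambda>g. if e = g then (1::'f) else 0)" unfolding ind_def by auto
    then show ?thesis using BD_delta[OF fE e(1), of X s t "1::'f"] by simp
  qed
  show "BD X E s t (Ztop T s t e :: 'e \<Rightarrow> 'f) = (\<lambda>x. 0)"
    unfolding Z BD_diff BDi pv_BD[OF P TE fE] by simp
  show "(Ztop T s t e :: 'e \<Rightarrow> 'f) \<in> fspace E"
    unfolding Z fspace_def using e gsT TE by (auto simp: ind_def intro!: pv_zero)
  show "\<And>g. g \<notin> T \<Longrightarrow> (Ztop T s t e :: 'e \<Rightarrow> 'f) g = ind e g"
    unfolding Z using gsT by (auto intro!: pv_zero)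
qed




lemma cut_lemma:
  assumes D: "multigraph X E s t" and TE: "T \<subseteq> E" and ac: "acyclic_edges T s t"
    and u: "(u :: 'e \<Rightarrow> 'f::field) \<in> fspace T" and B: "BD X E s t u = (\<lambda>x. 0)"
  shows "u = (\<lambda>e. 0)"
proof
  fix e0
  show "u e0 = 0"
  proof (cases "e0 \<in> T")
    case False then show ?thesis using u unfolding fspace_def by blast
  next
    case True
    have fX: "finite X" and fE: "finite E" and inX: "\<forall>e\<in>E. s e \<in> X \<and> t e \<in> X"
      using D unfolding multigraph_def by auto
    define C where "C = {x \<in> X. (s e0, x) \<in> uconn (T - {e0}) s t}"
    have fC: "finite C" unfolding C_def using fX by simp
    define chi :: "_ \<Rightarrow> 'f" where "chi y = (if y \<in> C then 1 else 0)" for y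
    have indsum: "(\<Sum>x\<in>C. ind a x :: 'f) = chi a" for a
      unfolding ind_def chi_def using fC by (simp add: sum.delta')
    have "s e0 \<in> C" unfolding C_def using inX True TE by auto
    then have cs: "chi (s e0) = 1" unfolding chi_def by simp
    have "(s e0, t e0) \<notin> uconn (T - {e0}) s t" using ac True unfolding acyclic_edges_def by blast
    then have "t e0 \<notin> C" unfolding C_def by blast
    then have ct: "chi (t e0) = 0" unfolding chi_def by simp
    have "0 = (\<Sum>x\<in>C. BD X E s t u x)" using B by simp
    also have "\<dots> = (\<Sum>x\<in>C. \<Sum>e\<in>E. u e * ind (t e) x - u e * ind (s e) x)"
      unfolding BD_def by (simp add: right_diff_distrib)
    also have "\<dots> = (\<Sum>e\<in>E. \<Sum>x\<in>C. u e * ind (t e) x - u e * ind (s e) x)"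
      by (rule sum.swap)
    also have "\<dots> = (\<Sum>e\<in>E. u e * (chi (t e) - chi (s e)))"
      by (simp add: sum_subtractf sum_distrib_left[symmetric] indsum right_diff_distrib)
    also have "\<dots> = u e0 * (chi (t e0) - chi (s e0)) + (\<Sum>e\<in>E - {e0}. u e * (chi (t e) - chi (s e)))"
      using True TE fE by (intro sum.remove) auto
    also have "(\<Sum>e\<in>E - {e0}. u e * (chi (t e) - chi (s e))) = 0"
    proof (rule sum.neutral, rule ballI)
      fix e assume e: "e \<in> E - {e0}"
      show "u e * (chi (t e) - chi (s e)) = 0"
      proof (cases "e \<in> T")
        case False then show ?thesis using u unfolding fspace_def by simp
      next
        case True
        then have eT: "e \<in> T - {e0}" using e by blast
        have X2: "s e \<in> X" "t e \<in> X" using inX e by auto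
        have "(s e, t e) \<in> uconn (T - {e0}) s t" using eT by (rule uconn_edge)
        moreover have "(t e, s e) \<in> uconn (T - {e0}) s t" using eT by (rule uconn_edge')
        ultimately have "s e \<in> C \<longleftrightarrow> t e \<in> C" unfolding C_def using X2
          uconn_trans[of "s e0" "s e" "T - {e0}" s t "t e"] uconn_trans[of "s e0" "t e" "T - {e0}" s t "s e"] by blast
        then show ?thesis unfolding chi_def by simp
      qed
    qed
    also have "chi (s e0) = 1" by (rule cs)
    also have "chi (t e0) = 0" by (rule ct)
    finally show ?thesis by simp
  qed
qed




lemma indep_coeffs:
  assumes V: "vector_space sc" and fB: "finite B" and inj: "inj_on r B"
    and ind: "module.independent sc (r ` B)"
    and S: "(\<Sum>i\<in>B. sc (c i) (r i)) = 0" and i: "i \<in> B"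
  shows "c i = 0"
proof -
  interpret V: vector_space sc by (rule V)
  define u where "u w = c (the_inv_into B r w)" for w
  have "(\<Sum>w\<in>r`B. sc (u w) w) = (\<Sum>i\<in>B. sc (u (r i)) (r i))"
    using sum.reindex[OF inj, of "\<lambda>w. sc (u w) w"] by (simp add: comp_def)
  also have "\<dots> = (\<Sum>i\<in>B. sc (c i) (r i))"
    using the_inv_into_f_f[OF inj] unfolding u_def by (intro sum.cong) auto
  finally have "(\<Sum>w\<in>r`B. sc (u w) w) = 0" using S by simp
  then have "\<forall>w\<in>r`B. u w = 0" using V.dependent_finite[of "r`B"] fB ind by auto
  then show ?thesis using i the_inv_into_f_f[OF inj i] unfolding u_def by auto
qed

lemma indep_family:
  assumes V: "vector_space sc" and fI: "finite I" and inj: "inj_on v I"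
    and H: "\<And>c. (\<Sum>j\<in>I. sc (c j) (v j)) = 0 \<Longrightarrow> \<forall>j\<in>I. c j = 0"
  shows "module.independent sc (v ` I)"
proof -
  interpret V: vector_space sc by (rule V)
  have "\<not> (\<exists>u. (\<exists>w\<in>v ` I. u w \<noteq> 0) \<and> (\<Sum>w\<in>v ` I. sc (u w) w) = 0)"
  proof
    assume "\<exists>u. (\<exists>w\<in>v ` I. u w \<noteq> 0) \<and> (\<Sum>w\<in>v ` I. sc (u w) w) = 0"
    then obtain u where u: "\<exists>w\<in>v ` I. u w \<noteq> 0" "(\<Sum>w\<in>v ` I. sc (u w) w) = 0" by blast
    have "(\<Sum>j\<in>I. sc (u (v j)) (v j)) = 0"
      using u(2) sum.reindex[OF inj, of "\<lambda>w. sc (u w) w"] by (simp add: comp_def)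
    then have "\<forall>j\<in>I. u (v j) = 0" by (rule H)
    then show False using u(1) by blast
  qed
  then show ?thesis using V.dependent_finite[of "v ` I"] fI by simp
qed

theorem theorem2p15:
  fixes X :: "'x set" and E :: "'e set" and s t :: "'e \<Rightarrow> 'x"
    and scale :: "'f::field \<Rightarrow> 'u::ab_group_add \<Rightarrow> 'u"
    and \<phi> :: "'x \<Rightarrow> 'u" and T :: "'e set"
    and r :: "nat \<Rightarrow> ('x \<Rightarrow> 'f)" and \<zeta> :: "nat \<Rightarrow> ('e \<Rightarrow> 'f)"
  assumes D: "multigraph X E s t"
    and U: "vector_space scale"
    and T: "spanning_forest X E s t T"
    and r: "is_basis_family fscale {..<delta_phi scale X E s t \<phi>} r (Zalg scale X E s t \<phi>)"
    and \<zeta>_ker: "\<forall>i < delta_phi scale X E s t \<phi>. \<zeta> i \<in> ker_dphi scale E s t \<phi>"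
    and \<zeta>_lift: "\<forall>i < delta_phi scale X E s t \<phi>. BD X E s t (\<zeta> i) = r i"
  shows "is_basis_family fscale
           (Inl ` (E - T) \<union> Inr ` {..<delta_phi scale X E s t \<phi>})
           (case_sum (Ztop T s t) \<zeta>)
           (ker_dphi scale E s t \<phi>)"
proof -
  interpret VE: vector_space "fscale :: 'f \<Rightarrow> ('e \<Rightarrow> 'f) \<Rightarrow> ('e \<Rightarrow> 'f)" by (rule vs_fscale)
  interpret VX: vector_space "fscale :: 'f \<Rightarrow> ('x \<Rightarrow> 'f) \<Rightarrow> ('x \<Rightarrow> 'f)" by (rule vs_fscale)
  interpret U: vector_space scale by (rule U)
  define n where "n = delta_phi scale X E s t \<phi>"
  define A where "A = E - T"
  define I where "I = Inl ` A \<union> Inr ` {..<n}"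
  define v where "v = case_sum (Ztop T s t) \<zeta>"
  define K where "K = ker_dphi scale E s t \<phi>"
  have fX: "finite X" and fE: "finite E" and inX: "\<forall>e\<in>E. s e \<in> X \<and> t e \<in> X"
    using D unfolding multigraph_def by auto
  have TE: "T \<subseteq> E" and ac: "acyclic_edges T s t" using T unfolding spanning_forest_def by auto
  have r_inj: "inj_on r {..<n}" and r_ind: "VX.independent (r ` {..<n})"
    and r_span: "VX.span (r ` {..<n}) = Zalg scale X E s t \<phi>"
    using r unfolding is_basis_family_def n_def by auto
  have fA: "finite A" unfolding A_def using fE by simp
  have Z0: "BD X E s t (Ztop T s t e :: 'e \<Rightarrow> 'f) = (\<lambda>x. 0)" if "e \<in> A" for e
    using that unfolding A_def by (intro Z_props(1)[OF D T]) auto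
  have ZE: "(Ztop T s t e :: 'e \<Rightarrow> 'f) \<in> fspace E" if "e \<in> A" for e
    using that unfolding A_def by (intro Z_props(2)[OF D T]) auto
  have Zoff: "(Ztop T s t e :: 'e \<Rightarrow> 'f) g = ind e g" if "e \<in> A" "g \<notin> T" for e g
    using that unfolding A_def by (intro Z_props(3)[OF D T]) auto
  have zK: "\<zeta> i \<in> K" if "i < n" for i using \<zeta>_ker that unfolding n_def K_def by simp
  have zB: "BD X E s t (\<zeta> i) = r i" if "i < n" for i using \<zeta>_lift that unfolding n_def by simp
  have zE: "\<zeta> i \<in> fspace E" if "i < n" for i using zK[OF that] unfolding K_def ker_dphi_def by simp
  have r_coef: "c i = 0" if "(\<Sum>i<n. fscale (c i) (r i)) = 0" "i < n" for c i
    using indep_coeffs[OF vs_fscale _ r_inj r_ind that(1)] that(2) by simp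
  have rnz: "r i \<noteq> 0" if i: "i < n" for i
  proof
    assume "r i = 0"
    then have "0 \<in> r ` {..<n}" using i by (metis imageI lessThan_iff)
    then have "VX.dependent (r ` {..<n})" by (rule VX.dependent_zero)
    then show False using r_ind by simp
  qed
  have Zself: "(Ztop T s t e :: 'e \<Rightarrow> 'f) e = 1" if "e \<in> A" for e
    using Zoff[OF that] that unfolding A_def ind_def by simp
  have inj: "inj_on v I"
  proof (rule inj_onI)
    fix j1 j2 assume j1: "j1 \<in> I" and j2: "j2 \<in> I" and eq: "v j1 = v j2"
    show "j1 = j2"
    proof (cases j1)
      case (Inl e1) note j1e = this
      then have e1: "e1 \<in> A" using j1 unfolding I_def by auto
      show ?thesis
      proof (cases j2)
        case (Inl e2)
        then have e2: "e2 \<in> A" using j2 unfolding I_def by auto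
        have "Ztop T s t e1 = (Ztop T s t e2 :: 'e \<Rightarrow> 'f)" using eq j1e Inl unfolding v_def by simp
        then have "(Ztop T s t e2 :: 'e \<Rightarrow> 'f) e1 = 1" using Zself[OF e1] by simp
        then have "e1 = e2" using Zoff[OF e2, of e1] e1 unfolding A_def ind_def by (auto split: if_splits)
        then show ?thesis using j1e Inl by simp
      next
        case (Inr i)
        then have i: "i < n" using j2 unfolding I_def by auto
        have "Ztop T s t e1 = \<zeta> i" using eq j1e Inr unfolding v_def by simp
        then have "r i = (\<lambda>x. 0)" using zB[OF i] Z0[OF e1] by simp
        then show ?thesis using rnz[OF i] by (simp add: zero_fun_def)
      qed
    next
      case (Inr i1) note j1i = this
      then have i1: "i1 < n" using j1 unfolding I_def by auto
      show ?thesis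
      proof (cases j2)
        case (Inl e2)
        then have e2: "e2 \<in> A" using j2 unfolding I_def by auto
        have "Ztop T s t e2 = \<zeta> i1" using eq j1i Inl unfolding v_def by simp
        then have "r i1 = (\<lambda>x. 0)" using zB[OF i1] Z0[OF e2] by simp
        then show ?thesis using rnz[OF i1] by (simp add: zero_fun_def)
      next
        case (Inr i2)
        then have i2: "i2 < n" using j2 unfolding I_def by auto
        have "\<zeta> i1 = \<zeta> i2" using eq j1i Inr unfolding v_def by simp
        then have "r i1 = r i2" using zB[OF i1] zB[OF i2] by simp
        then have "i1 = i2" using r_inj i1 i2 unfolding inj_on_def by blast
        then show ?thesis using j1i Inr by simp
      qed
    qed
  qed
  have indep: "VE.independent (v ` I)"
  proof (rule indep_family[OF vs_fscale _ inj])
    show "finite I" unfolding I_def using fA by simp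
  next
    fix c :: "'e + nat \<Rightarrow> 'f"
    assume S: "(\<Sum>j\<in>I. fscale (c j) (v j)) = 0"
    define c1 where "c1 e = c (Inl e)" for e
    define c2 where "c2 i = c (Inr i)" for i
    have "(\<Sum>j\<in>I. fscale (c j) (v j)) = (\<Sum>j\<in>Inl ` A. fscale (c j) (v j)) + (\<Sum>j\<in>Inr ` {..<n}. fscale (c j) (v j))"
      unfolding I_def using fA by (intro sum.union_disjoint) auto
    also have "(\<Sum>j\<in>Inl ` A. fscale (c j) (v j)) = (\<Sum>e\<in>A. fscale (c1 e) (Ztop T s t e))"
      by (subst sum.reindex) (auto simp: inj_on_def c1_def v_def)
    also have "(\<Sum>j\<in>Inr ` {..<n}. fscale (c j) (v j)) = (\<Sum>i<n. fscale (c2 i) (\<zeta> i))"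
      by (subst sum.reindex) (auto simp: inj_on_def c2_def v_def)
    finally have S1: "(\<Sum>j\<in>I. fscale (c j) (v j)) = (\<Sum>e\<in>A. fscale (c1 e) (Ztop T s t e)) + (\<Sum>i<n. fscale (c2 i) (\<zeta> i))" .
    have S2: "(\<Sum>e\<in>A. fscale (c1 e) (Ztop T s t e)) + (\<Sum>i<n. fscale (c2 i) (\<zeta> i)) = 0"
      using S S1 by metis
    then have P: "(\<lambda>x. (\<Sum>e\<in>A. c1 e * Ztop T s t e x) + (\<Sum>i<n. c2 i * \<zeta> i x)) = (\<lambda>x. 0)"
      unfolding fsum by (simp add: fun_eq_iff)
    have "BD X E s t (\<lambda>x. (\<Sum>e\<in>A. c1 e * Ztop T s t e x) + (\<Sum>i<n. c2 i * \<zeta> i x))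
        = (\<lambda>y. (\<Sum>e\<in>A. c1 e * BD X E s t (Ztop T s t e) y) + (\<Sum>i<n. c2 i * BD X E s t (\<zeta> i) y))"
      unfolding BD_add BD_lin ..
    also have "\<dots> = (\<lambda>y. \<Sum>i<n. c2 i * r i y)"
      using Z0 zB by simp
    finally have "(\<lambda>y. \<Sum>i<n. c2 i * r i y) = BD X E s t (\<lambda>x. 0 :: 'f)" unfolding P by simp
    also have "\<dots> = (\<lambda>y. 0)" unfolding BD_def by simp
    finally have "(\<Sum>i<n. fscale (c2 i) (r i)) = 0" unfolding fsum by (simp add: zero_fun_def)
    then have c20: "c2 i = 0" if "i < n" for i using r_coef that by blast
    have c10: "c1 e = 0" if e: "e \<in> A" for e
    proof -
      have "(\<Sum>e'\<in>A. c1 e' * Ztop T s t e' e) + (\<Sum>i<n. c2 i * \<zeta> i e) = 0" using fun_cong[OF P, of e] by simp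
      then have "(\<Sum>e'\<in>A. c1 e' * Ztop T s t e' e) = 0" using c20 by simp
      moreover have "(\<Sum>e'\<in>A. c1 e' * Ztop T s t e' e) = (\<Sum>e'\<in>A. if e' = e then c1 e' else 0)"
        using e Zoff unfolding A_def ind_def by (intro sum.cong) auto
      ultimately show ?thesis using e fA by simp
    qed
    show "\<forall>j\<in>I. c j = 0"
      unfolding I_def using c10 c20 unfolding c1_def c2_def by auto
  qed
  have dphi_add: "dphi scale E s t \<phi> (x + y) = dphi scale E s t \<phi> x + dphi scale E s t \<phi> y" for x y
    unfolding dphi_def by (simp add: U.scale_left_distrib sum.distrib)
  have dphi_scale: "dphi scale E s t \<phi> (fscale c x) = scale c (dphi scale E s t \<phi> x)" for c x
    unfolding dphi_def fscale_def by (simp add: U.scale_sum_right)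
  have sub: "VE.subspace K"
    unfolding VE.subspace_def K_def ker_dphi_def
  proof (intro conjI ballI allI)
    show "0 \<in> {z \<in> fspace E. dphi scale E s t \<phi> z = 0}"
      unfolding fspace_def dphi_def by simp
  next
    fix x y assume x: "x \<in> {z \<in> fspace E. dphi scale E s t \<phi> z = 0}" and y: "y \<in> {z \<in> fspace E. dphi scale E s t \<phi> z = 0}"
    then show "x + y \<in> {z \<in> fspace E. dphi scale E s t \<phi> z = 0}"
      unfolding fspace_def using dphi_add by auto
  next
    fix c x assume x: "x \<in> {z \<in> fspace E. dphi scale E s t \<phi> z = 0}"
    then show "fscale c x \<in> {z \<in> fspace E. dphi scale E s t \<phi> z = 0}"
      unfolding fspace_def using dphi_scale by (auto simp: fscale_def)
  qed
  have vK: "v ` I \<subseteq> K"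
  proof
    fix w assume "w \<in> v ` I"
    then obtain j where j: "j \<in> I" "w = v j" by blast
    show "w \<in> K"
    proof (cases j)
      case (Inl e)
      then have e: "e \<in> A" using j unfolding I_def by auto
      have "dphi scale E s t \<phi> (Ztop T s t e) = phi_hat scale X \<phi> (\<lambda>x. 0)"
        using dphi_BD[OF D U] Z0[OF e] by simp
      also have "\<dots> = 0" unfolding phi_hat_def by simp
      finally show ?thesis using ZE[OF e] j Inl unfolding K_def ker_dphi_def v_def by simp
    next
      case (Inr i)
      then have "i < n" using j unfolding I_def by auto
      then show ?thesis using zK j Inr unfolding v_def by simp
    qed
  qed
  have span1: "VE.span (v ` I) \<subseteq> K" using VE.span_minimal[OF vK sub] .
  have span2: "K \<subseteq> VE.span (v ` I)"
  proof
    fix z assume "z \<in> K"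
    then have zE': "z \<in> fspace E" and dz: "dphi scale E s t \<phi> z = 0" unfolding K_def ker_dphi_def by auto
    have "BD X E s t z \<in> Zalg scale X E s t \<phi>"
      unfolding Zalg_def using zE' BD_fspace[OF D] dz dphi_BD[OF D U] by auto
    then have "BD X E s t z \<in> VX.span (r ` {..<n})" using r_span by simp
    then obtain u where u: "BD X E s t z = (\<Sum>w\<in>r ` {..<n}. fscale (u w) w)"
      using VX.span_finite[of "r ` {..<n}"] by auto
    define c where "c i = u (r i)" for i
    have "BD X E s t z = (\<Sum>i<n. fscale (c i) (r i))"
      unfolding u c_def using sum.reindex[OF r_inj, of "\<lambda>w. fscale (u w) w"] by (simp add: comp_def)
    then have BDz: "BD X E s t z = (\<lambda>x. \<Sum>i<n. c i * r i x)" unfolding fsum .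
    define y where "y = (\<lambda>e. z e - (\<Sum>i<n. c i * \<zeta> i e))"
    have BDy: "BD X E s t y = (\<lambda>x. 0)"
      unfolding y_def BD_diff BD_lin BDz using zB by simp
    have yE: "y \<in> fspace E" using zE' zE unfolding y_def fspace_def by simp
    define w where "w = (\<lambda>e. y e - (\<Sum>e'\<in>A. y e' * Ztop T s t e' e))"
    have BDw: "BD X E s t w = (\<lambda>x. 0)"
      unfolding w_def BD_diff BD_lin BDy using Z0 by simp
    have wT: "w \<in> fspace T" unfolding fspace_def mem_Collect_eq
    proof (intro allI impI)
      fix g assume g: "g \<notin> T"
      show "w g = 0"
      proof (cases "g \<in> E")
        case True
        then have gA: "g \<in> A" unfolding A_def using g by simp
        have "(\<Sum>e'\<in>A. y e' * Ztop T s t e' g) = (\<Sum>e'\<in>A. if e' = g then y e' else 0)"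
          using g Zoff unfolding ind_def by (intro sum.cong) auto
        also have "\<dots> = y g" using gA fA by simp
        finally show ?thesis unfolding w_def by simp
      next
        case False
        then have "y g = 0" using yE unfolding fspace_def by simp
        moreover have "(Ztop T s t e' g :: 'f) = 0" if "e' \<in> A" for e'
          using ZE[OF that] False unfolding fspace_def by simp
        ultimately show ?thesis unfolding w_def by simp
      qed
    qed
    have "w = (\<lambda>e. 0)" by (rule cut_lemma[OF D TE ac wT BDw])
    have zeq: "z e = (\<Sum>i<n. c i * \<zeta> i e) + (\<Sum>e'\<in>A. y e' * Ztop T s t e' e)" for e
    proof -
      have h1: "y e = (\<Sum>e'\<in>A. y e' * Ztop T s t e' e)"
        using fun_cong[OF \<open>w = (\<lambda>e. 0)\<close>, of e] unfolding w_def by simp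
      have h2: "y e = z e - (\<Sum>i<n. c i * \<zeta> i e)" unfolding y_def by simp
      from h2 have "z e = y e + (\<Sum>i<n. c i * \<zeta> i e)" by (simp add: algebra_simps)
      then show ?thesis using h1 by (simp add: add.commute)
    qed
    have "z = (\<Sum>i<n. fscale (c i) (\<zeta> i)) + (\<Sum>e'\<in>A. fscale (y e') (Ztop T s t e'))"
      unfolding fsum by (rule ext) (simp only: plus_fun_apply zeq)
    also have "\<dots> \<in> VE.span (v ` I)"
    proof (intro VE.span_add VE.span_sum VE.span_scale VE.span_base)
      fix i assume "i \<in> {..<n}"
      then show "\<zeta> i \<in> v ` I" unfolding I_def v_def by (auto intro!: image_eqI[of _ _ "Inr i"])
    next
      fix e assume "e \<in> A"
      then show "Ztop T s t e \<in> v ` I" unfolding I_def v_def by (auto intro!: image_eqI[of _ _ "Inl e"])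
    qed
    finally show "z \<in> VE.span (v ` I)" .
  qed
  have speq: "VE.span (v ` I) = K" by (rule subset_antisym[OF span1 span2])
  have eqs: "Inl ` (E - T) \<union> Inr ` {..<delta_phi scale X E s t \<phi>} = I"
    "case_sum (Ztop T s t) \<zeta> = v" "ker_dphi scale E s t \<phi> = K"
    unfolding I_def A_def n_def v_def K_def by simp_all
  show ?thesis unfolding is_basis_family_def eqs using inj indep speq by (intro conjI)
qed


end
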